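(* Let $\mathbf A\in\mathcal S_{++}^n$, and let $(\mathbf W(t),\mathbf M(t))$ be a solution of the ODE $(\ast)$ with $\tau=\tfrac12$ and initial condition $(\mathbf W_0,\mathbf M_0)\in\mathcal D$. Then, for all $t\ge 0$, $$L(\mathbf W(t),\mathbf M(t))=L(\mathbf W_0,\mathbf M_0)\,e^{-8t}.$$
   Context: Let $n>k\ge1$ be integers. $\mathcal S_{++}^m$ denotes the $m\times m$ symmetric positive definite matrices; $\mathbf A\in\mathcal S_{++}^n$, and $\mathcal D:=\mathbb R^{k\times n}\times\mathcal S_{++}^k$. For a parameter $\tau>0$, consider the ODE $(\ast)$ on $\mathcal D$: $$\tfrac12\tfrac{d\mathbf W}{dt}=\mathbf M^{-1}\mathbf W\mathbf A-\mathbf W,\qquad \tau\tfrac{d\mathbf M}{dt}=\mathbf M^{-1}\mathbf W\mathbf A\mathbf W^\top\mathbf M^{-1}-\mathbf M.$$ A solution is a continuously differentiable map $[0,\infty)\to\mathcal D$ satisfying $(\ast)$. Define $L(\mathbf W,\mathbf M):=\|\mathbf W\mathbf W^\top-\mathbf M^2\|^2=\operatorname{tr}[(\mathbf W\mathbf W^\top-\mathbf M^2)^2]$, where $\|\cdot\|$ is the Frobenius norm. *)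

theory Defs
  imports "HOL-Analysis.Analysis"
begin

definition spd :: "real^'m^'m \<Rightarrow> bool" where
  "spd M \<longleftrightarrow> transpose M = M \<and> (\<forall>x. x \<noteq> 0 \<longrightarrow> x \<bullet> (M *v x) > 0)"

definition Lfun :: "real^'n^'k \<Rightarrow> real^'k^'k \<Rightarrow> real" where
  "Lfun W M = trace ((W ** transpose W - M ** M) ** (W ** transpose W - M ** M))"

end

theory Submission
  imports Defs
begin

lemma mm_bilin: "bounded_bilinear (\<lambda>(X::real^'b^'a) (Y::real^'b^'c). X ** transpose Y)"
proof -
  have "bilinear (\<lambda>(X::real^'b^'a) (Y::real^'b^'c). X ** transpose Y)"
    unfolding bilinear_def
    by (auto intro!: linearI simp: matrix_matrix_mult_def transpose_def vec_eq_iff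
        sum.distrib[symmetric] sum_distrib_left field_simps)
  then show ?thesis using bilinear_conv_bounded_bilinear by blast
qed

lemma mm_bilin2: "bounded_bilinear (\<lambda>(X::real^'b^'a) (Y::real^'c^'b). X ** Y)"
proof -
  have "bilinear (\<lambda>(X::real^'b^'a) (Y::real^'c^'b). X ** Y)"
    unfolding bilinear_def
    by (auto intro!: linearI simp: matrix_matrix_mult_def vec_eq_iff
        sum.distrib[symmetric] sum_distrib_left field_simps)
  then show ?thesis using bilinear_conv_bounded_bilinear by blast
qed

lemma spd_inv:
  fixes M :: "real^'k^'k"
  assumes "spd M"
  shows "M ** matrix_inv M = mat 1" "matrix_inv M ** M = mat 1"
    "transpose (matrix_inv M) = matrix_inv M"
proof -
  have "inj ((*v) M)"
  proof (rule injI)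
    fix x y assume "M *v x = M *v y"
    then have "M *v (x - y) = 0" by (simp add: matrix_vector_mult_diff_distrib)
    then show "x = y" using assms unfolding spd_def
      by (metis inner_zero_right less_irrefl right_minus_eq)
  qed
  then have "invertible M"
    using matrix_left_invertible_injective invertible_left_inverse by blast
  then have "\<exists>A'. M ** A' = mat 1 \<and> A' ** M = mat 1" by (simp add: invertible_def)
  then have *: "M ** matrix_inv M = mat 1 \<and> matrix_inv M ** M = mat 1"
    unfolding matrix_inv_def by (rule someI_ex)
  then show "M ** matrix_inv M = mat 1" "matrix_inv M ** M = mat 1" by auto
  have tM: "transpose M = M" using assms spd_def by blast
  have "transpose (matrix_inv M) ** M = mat 1"
    by (metis * tM matrix_transpose_mul transpose_mat)
  then have "transpose (matrix_inv M) = transpose (matrix_inv M) ** (M ** matrix_inv M)"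
    using * by simp
  also have "\<dots> = matrix_inv M" 
    by (metis \<open>transpose (matrix_inv M) ** M = mat 1\<close> matrix_mul_assoc matrix_mul_lid)
  finally show "transpose (matrix_inv M) = matrix_inv M" .
qed


lemma mdiff_l: "(A::real^'b^'a) ** (B - C) = A ** B - A ** C"
  by (vector matrix_matrix_mult_def sum_subtractf[symmetric] field_simps)
lemma mdiff_r: "((A::real^'b^'a) - B) ** C = A ** C - B ** C"
  by (vector matrix_matrix_mult_def sum_subtractf[symmetric] field_simps)
lemma transpose_diff: "transpose ((A::real^'b^'a) - B) = transpose A - transpose B"
  by (simp add: transpose_def vec_eq_iff)
lemma transpose_scaleR: "transpose (c *\<^sub>R (A::real^'b^'a)) = c *\<^sub>R transpose A"
  by (simp add: transpose_def vec_eq_iff)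

theorem lemma2:
  fixes A :: "real^'n^'n"
    and W W' :: "real \<Rightarrow> real^'n^'k"
    and M M' :: "real \<Rightarrow> real^'k^'k"
    and \<tau> :: real
  assumes dims: "CARD('k) < CARD('n)"
    and A_spd: "spd A"
    and tau: "\<tau> = 1/2"
    and M_spd: "\<And>t. t \<ge> 0 \<Longrightarrow> spd (M t)"
    and W_deriv: "\<And>t. t \<ge> 0 \<Longrightarrow> (W has_vector_derivative W' t) (at t within {0..})"
    and M_deriv: "\<And>t. t \<ge> 0 \<Longrightarrow> (M has_vector_derivative M' t) (at t within {0..})"
    and W'_cont: "continuous_on {0..} W'"
    and M'_cont: "continuous_on {0..} M'"
    and W_ode: "\<And>t. t \<ge> 0 \<Longrightarrow>
       (1/2) *\<^sub>R W' t = matrix_inv (M t) ** W t ** A - W t"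
    and M_ode: "\<And>t. t \<ge> 0 \<Longrightarrow>
       \<tau> *\<^sub>R M' t = matrix_inv (M t) ** W t ** A ** transpose (W t) ** matrix_inv (M t) - M t"
  shows "\<forall>t\<ge>0. Lfun (W t) (M t) = Lfun (W 0) (M 0) * exp (- 8 * t)"
proof -
  define D where "D t = W t ** transpose (W t) - M t ** M t" for t
  have tA: "transpose A = A" using A_spd spd_def by blast
  have Dder: "(D has_vector_derivative (-4) *\<^sub>R D t) (at t within {0..})" if t: "t \<ge> 0" for t
  proof -
    define P where "P = matrix_inv (M t)"
    have PM: "M t ** P = mat 1" "P ** M t = mat 1" "transpose P = P"
      using spd_inv[OF M_spd[OF t]] by (auto simp: P_def)
    have PM2: "X ** M t ** P = X" "X ** P ** M t = X" for X :: "real^'k^'k"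
      by (metis PM(1,2) matrix_mul_assoc matrix_mul_rid)+
    have W'e: "W' t = 2 *\<^sub>R (P ** W t ** A - W t)"
      using W_ode[OF t] unfolding P_def[symmetric]
      by (metis (no_types, lifting) scaleR_scaleR scaleR_one times_divide_eq_right
          nonzero_mult_div_cancel_left divide_self_if zero_neq_numeral mult.commute)
    have M'e: "M' t = 2 *\<^sub>R (P ** W t ** A ** transpose (W t) ** P - M t)"
      using M_ode[OF t] unfolding P_def[symmetric] tau
      by (metis (no_types, lifting) scaleR_scaleR scaleR_one times_divide_eq_right
          nonzero_mult_div_cancel_left divide_self_if zero_neq_numeral mult.commute)
    have h1: "((\<lambda>t. W t ** transpose (W t)) has_vector_derivative
       (W t ** transpose (W' t) + W' t ** transpose (W t))) (at t within {0..})"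
      by (rule bounded_bilinear.has_vector_derivative[OF mm_bilin W_deriv[OF t] W_deriv[OF t]])
    have h2: "((\<lambda>t. M t ** M t) has_vector_derivative
       (M t ** M' t + M' t ** M t)) (at t within {0..})"
      by (rule bounded_bilinear.has_vector_derivative[OF mm_bilin2 M_deriv[OF t] M_deriv[OF t]])
    have "(D has_vector_derivative
       (W t ** transpose (W' t) + W' t ** transpose (W t)) - (M t ** M' t + M' t ** M t)) (at t within {0..})"
      unfolding D_def[abs_def] by (rule has_vector_derivative_diff[OF h1 h2])
    moreover have "(W t ** transpose (W' t) + W' t ** transpose (W t)) - (M t ** M' t + M' t ** M t)
       = (-4) *\<^sub>R D t"
      unfolding W'e M'e D_def
      by (simp add: transpose_diff transpose_scaleR matrix_transpose_mul tA PM mdiff_l mdiff_r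
          matrix_scalar_ac scalar_matrix_assoc[symmetric] matrix_mul_assoc PM2 algebra_simps)
    ultimately show ?thesis by simp
  qed
  define E where "E t = exp (4 * t) *\<^sub>R D t" for t
  have Eder: "(E has_vector_derivative 0) (at t within {0..})" if t: "t \<in> {0..}" for t
  proof -
    have e: "((\<lambda>t. exp (4 * t)) has_field_derivative exp (4 * t) * 4) (at t within {0..})"
      by (auto intro!: derivative_eq_intros)
    have "(E has_vector_derivative (exp (4 * t) *\<^sub>R ((-4) *\<^sub>R D t) + (exp (4 * t) * 4) *\<^sub>R D t))
       (at t within {0..})"
      unfolding E_def[abs_def] using has_vector_derivative_scaleR[OF e Dder] t by auto
    then show ?thesis by (simp add: algebra_simps)
  qed
  obtain c where c: "\<And>t. t \<in> {0..} \<Longrightarrow> E t = c"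
    using has_vector_derivative_zero_constant[OF convex_real_interval(1) Eder] by blast
  show ?thesis
  proof (intro allI impI)
    fix t :: real assume t: "t \<ge> 0"
    have "E t = E 0" using c t by auto
    moreover have "exp (-4*t) *\<^sub>R E t = D t" unfolding E_def by (simp flip: exp_add)
    moreover have "E 0 = D 0" unfolding E_def by simp
    ultimately have "D t = exp (- 4 * t) *\<^sub>R D 0" by simp
    moreover have "exp (- 8 * t) = exp (- 4 * t) * exp (- 4 * t)"
      by (simp flip: exp_add)
    ultimately show "Lfun (W t) (M t) = Lfun (W 0) (M 0) * exp (- 8 * t)"
      unfolding Lfun_def D_def[symmetric]
      by (simp add: matrix_scalar_ac scalar_matrix_assoc[symmetric] trace_def sum_distrib_left mult_ac)
  qed
qed

end
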